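(* Let $S(\mathbf{G},\mathbf{\Sigma})$ be a constrained switching system with $\mathbf{\Sigma}\subset\mathbb{R}^{n\times n}$ and let $M\ge1$ be an integer. Then the value $\gamma_*=\gamma_*(S_M)$ of the $M$-path-dependent lift $S_M$ of $S$ satisfies $$\hat\rho(S)\le\gamma_*\le n^{1/(2(M+1))}\,\hat\rho(S).$$
   Context: An automaton $\mathbf{G}(V,E)$ is a strongly connected directed graph with finite node set $V$ and finite edge set $E$ of labelled edges $(v,w,\sigma)$, $\sigma$ indexing a matrix $A_\sigma\in\mathbf{\Sigma}$. A path of length $T$ is a sequence of $T$ consecutive edges; a label sequence is accepted if it is the label sequence of some path (no prescribed initial/final node). The constrained switching system $S(\mathbf{G},\mathbf{\Sigma})$ is $x_{t+1}=A_{\sigma(t)}x_t$ with accepted switching sequences; its CJSR is $\hat\rho(S)=\lim_{t\to\infty}\max\{\|A_{\sigma(t-1)}\cdots A_{\sigma(0)}\|^{1/t} : \sigma(0),\dots,\sigma(t-1)\text{ accepted}\}$. $M$-path-dependent lift $S_M$ ($M\ge1$): same matrix set $\mathbf{\Sigma}$; automaton with one node $v_p$ per path $p$ of length $M$ in $\mathbf{G}$, and for each path $p=(e_1,\dots,e_{M+1})$ of length $M+1$ in $\mathbf{G}$ an edge $(v_{p^-},v_{p^+},\sigma_p)$ with $p^-=(e_1,\dots,e_M)$, $p^+=(e_2,\dots,e_{M+1})$ and $\sigma_p$ the label of $e_{M+1}$. For a constrained switching system $S'$ on automaton $(V',E')$, $\gamma_*(S')$ is the infimum of $\gamma$ such that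 there exist symmetric $Q_v\succ0$ ($v\in V'$) with $\gamma^2Q_v-A_\sigma^\top Q_wA_\sigma\succeq0$ for all $(v,w,\sigma)\in E'$. *)

theory Defs
  imports "HOL-Analysis.Analysis"
begin

text \<open>Labelled edges (v, w, sigma) of an automaton.\<close>

definition edge_src :: "'v \<times> 'v \<times> 's \<Rightarrow> 'v" where
  "edge_src e = fst e"

definition edge_tgt :: "'v \<times> 'v \<times> 's \<Rightarrow> 'v" where
  "edge_tgt e = fst (snd e)"

definition edge_lbl :: "'v \<times> 'v \<times> 's \<Rightarrow> 's" where
  "edge_lbl e = snd (snd e)"

text \<open>An automaton: finite node set, finite edge set between nodes, strongly connected.\<close>

definition automaton :: "'v set \<Rightarrow> ('v \<times> 'v \<times> 's) set \<Rightarrow> bool" where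
  "automaton V E \<longleftrightarrow> finite V \<and> finite E \<and>
     (\<forall>e\<in>E. edge_src e \<in> V \<and> edge_tgt e \<in> V) \<and>
     (\<forall>v\<in>V. \<forall>w\<in>V. (v, w) \<in> {(a, b). \<exists>s. (a, b, s) \<in> E}\<^sup>*)"

text \<open>A path is a list of consecutive edges of E; its length is the number of edges.\<close>

definition is_path :: "('v \<times> 'v \<times> 's) set \<Rightarrow> ('v \<times> 'v \<times> 's) list \<Rightarrow> bool" where
  "is_path E p \<longleftrightarrow> set p \<subseteq> E \<and>
     (\<forall>i. Suc i < length p \<longrightarrow> edge_tgt (p ! i) = edge_src (p ! Suc i))"

text \<open>Product A_{sigma(t-1)} ... A_{sigma(0)} for the label list [sigma(0), ..., sigma(t-1)].\<close>

fun mat_prod_seq :: "('s \<Rightarrow> real^'n^'n) \<Rightarrow> 's list \<Rightarrow> real^'n^'n" where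
  "mat_prod_seq A [] = mat 1"
| "mat_prod_seq A (s # ss) = mat_prod_seq A ss ** A s"

text \<open>Operator (induced Euclidean) norm of a matrix.\<close>

definition mnorm :: "real^'n^'n \<Rightarrow> real" where
  "mnorm B = onorm (\<lambda>x. B *v x)"

text \<open>Constrained joint spectral radius of S(G, Sigma): the limit of
  max over accepted label sequences of length t of the t-th root of the norm of the product.\<close>

definition cjsr :: "('v \<times> 'v \<times> 's) set \<Rightarrow> ('s \<Rightarrow> real^'n^'n) \<Rightarrow> real" where
  "cjsr E A = lim (\<lambda>t. Max {mnorm (mat_prod_seq A (map edge_lbl p)) powr (1 / real t) |
                              p. is_path E p \<and> length p = t})"

definition psd :: "real^'n^'n \<Rightarrow> bool" where
  "psd B \<longleftrightarrow> (\<forall>x. 0 \<le> x \<bullet> (B *v x))"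

definition pos_def :: "real^'n^'n \<Rightarrow> bool" where
  "pos_def B \<longleftrightarrow> (\<forall>x. x \<noteq> 0 \<longrightarrow> 0 < x \<bullet> (B *v x))"

text \<open>gamma_* of the constrained switching system on automaton (V', E') with matrices A.\<close>

definition gamma_star :: "'w set \<Rightarrow> ('w \<times> 'w \<times> 's) set \<Rightarrow> ('s \<Rightarrow> real^'n^'n) \<Rightarrow> real" where
  "gamma_star V' E' A = Inf {\<gamma>. 0 \<le> \<gamma> \<and>
     (\<exists>Q :: 'w \<Rightarrow> real^'n^'n.
        (\<forall>v\<in>V'. transpose (Q v) = Q v \<and> pos_def (Q v)) \<and>
        (\<forall>(v, w, \<sigma>)\<in>E'. psd ((\<gamma>\<^sup>2) *\<^sub>R Q v - transpose (A \<sigma>) ** Q w ** A \<sigma>)))}"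

text \<open>M-path-dependent lift: nodes are paths of length M, edges come from paths of length M+1.\<close>

definition lift_nodes :: "('v \<times> 'v \<times> 's) set \<Rightarrow> nat \<Rightarrow> ('v \<times> 'v \<times> 's) list set" where
  "lift_nodes E M = {p. is_path E p \<and> length p = M}"

definition lift_edges :: "('v \<times> 'v \<times> 's) set \<Rightarrow> nat \<Rightarrow>
    (('v \<times> 'v \<times> 's) list \<times> ('v \<times> 'v \<times> 's) list \<times> 's) set" where
  "lift_edges E M = {(take M p, drop 1 p, edge_lbl (last p)) | p. is_path E p \<and> length p = Suc M}"

end

theory Submission
  imports Defs
begin

(* ---- part LA ---- *)
lemma inner_mat_transpose: "inner x ((A::real^'n^'n) *v y) = inner (transpose A *v x) y"
  by (simp add: dot_lmul_matrix)

lemma qf_mult: "inner x ((transpose B ** Q ** B) *v x) = inner (B *v x) (Q *v (B *v x))"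
  for B Q :: "real^'n^'n"
proof -
  have "(transpose B ** Q ** B) *v x = transpose B *v (Q *v (B *v x))" by (simp only: matrix_vector_mul_assoc matrix_mul_assoc)
  then show ?thesis using inner_mat_transpose[of x "transpose B" "Q *v (B *v x)"] by (simp only: transpose_transpose)
qed

lemma qf_mult2: "inner x ((B ** Q ** transpose B) *v x) = inner (transpose B *v x) (Q *v (transpose B *v x))"
  for B Q :: "real^'n^'n"
  using qf_mult[of x "transpose B" Q] by simp

lemma sym_inner: assumes "transpose Q = Q"
  shows "inner x ((Q::real^'n^'n) *v y) = inner y (Q *v x)"
  by (metis assms inner_commute inner_mat_transpose)

lemma psd_cs:
  fixes Q :: "real^'n^'n"
  assumes sym: "transpose Q = Q" and ps: "\<And>x. 0 \<le> inner x (Q *v x)"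
  shows "(inner u (Q *v z))\<^sup>2 \<le> inner u (Q *v u) * inner z (Q *v z)"
proof -
  let ?a = "inner u (Q *v u)" and ?b = "inner u (Q *v z)" and ?c = "inner z (Q *v z)"
  have exp: "inner (u + s *\<^sub>R z) (Q *v (u + s *\<^sub>R z)) = ?a + 2 * s * ?b + s\<^sup>2 * ?c" for s
  proof -
    have "inner z (Q *v u) = ?b" using sym_inner[OF sym] by simp
    then show ?thesis
      by (simp add: matrix_vector_right_distrib matrix_vector_mult_scaleR inner_add_left inner_add_right power2_eq_square algebra_simps)
  qed
  have nn: "0 \<le> ?a + 2 * s * ?b + s\<^sup>2 * ?c" for s using ps[of "u + s *\<^sub>R z"] exp by simp
  have c0: "0 \<le> ?c" using ps by simp
  show ?thesis
  proof (cases "?c = 0")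
    case True
    have "?b = 0"
    proof (rule ccontr)
      assume "?b \<noteq> 0"
      have "0 \<le> ?a + 2 * (- (?a + 1) / (2 * ?b)) * ?b" using nn[of "- (?a + 1) / (2 * ?b)"] True by simp
      also have "\<dots> = -1" using \<open>?b \<noteq> 0\<close> by (simp add: field_simps)
      finally show False by simp
    qed
    then show ?thesis using True by simp
  next
    case False
    hence cp: "0 < ?c" using c0 by simp
    have "0 \<le> ?a + 2 * (- ?b / ?c) * ?b + (- ?b / ?c)\<^sup>2 * ?c" using nn by blast
    also have "\<dots> = ?a - ?b\<^sup>2 / ?c" using cp by (simp add: field_simps power2_eq_square)
    finally have "?b\<^sup>2 / ?c \<le> ?a" by simp
    then show ?thesis using cp by (simp add: divide_le_eq mult.commute)
  qed
qed

lemma pd_lower: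
  fixes Q :: "real^'n^'n"
  assumes "pos_def Q"
  shows "\<exists>c>0. \<forall>x. c * (norm x)\<^sup>2 \<le> inner x (Q *v x)"
proof -
  have cont: "continuous_on (sphere 0 1) (\<lambda>x. inner x (Q *v x))"
    by (intro continuous_intros)
  obtain a :: "real^'n" where a: "norm a = 1"
    using vector_choose_size[of 1] by auto
  have ne: "sphere (0::real^'n) 1 \<noteq> {}" using a by auto
  obtain x0 where x0: "x0 \<in> sphere 0 1" and mn: "\<And>y. y \<in> sphere 0 1 \<Longrightarrow> inner x0 (Q *v x0) \<le> inner y (Q *v y)"
    using continuous_attains_inf[OF compact_sphere ne cont] by blast
  have "x0 \<noteq> 0" using x0 by auto
  hence cpos: "0 < inner x0 (Q *v x0)" using assms unfolding pos_def_def by auto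
  have "inner x0 (Q *v x0) * (norm x)\<^sup>2 \<le> inner x (Q *v x)" for x
  proof (cases "x = 0")
    case True then show ?thesis by simp
  next
    case False
    let ?y = "(1 / norm x) *\<^sub>R x"
    have "?y \<in> sphere 0 1" using False by simp
    hence "inner x0 (Q *v x0) \<le> inner ?y (Q *v ?y)" by (rule mn)
    also have "\<dots> = inner x (Q *v x) / (norm x)\<^sup>2"
      by (simp add: matrix_vector_mult_scaleR power2_eq_square)
    finally show ?thesis using False by (simp add: le_divide_eq)
  qed
  then show ?thesis using cpos by blast
qed

lemma qf_upper:
  fixes Q :: "real^'n^'n"
  shows "inner x (Q *v x) \<le> mnorm Q * (norm x)\<^sup>2"
proof -
  have "inner x (Q *v x) \<le> norm x * norm (Q *v x)" by (rule norm_cauchy_schwarz)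
  also have "\<dots> \<le> norm x * (mnorm Q * norm x)"
    using onorm[OF matrix_vector_mul_bounded_linear[of Q] , of x] unfolding mnorm_def
    by (intro mult_left_mono) auto
  finally show ?thesis by (simp add: power2_eq_square algebra_simps)
qed

(* ---- part LB ---- *)
lemma pd_invertible:
  fixes P :: "real^'n^'n"
  assumes "pos_def P"
  shows "invertible P"
proof -
  have "inj ((*v) P)"
  proof (rule injI)
    fix x y assume "P *v x = P *v y"
    hence "P *v (x - y) = 0" by (simp add: matrix_vector_mult_diff_distrib)
    hence "inner (x - y) (P *v (x - y)) = 0" by simp
    thus "x = y" using assms unfolding pos_def_def by (metis less_irrefl right_minus_eq)
  qed
  have "det (matrix ((*v) P)) \<noteq> 0 \<longleftrightarrow> inj ((*v) P)" by (rule det_nz_iff_inj) simp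
  then have "det P \<noteq> 0" using \<open>inj ((*v) P)\<close> by (simp only: matrix_of_matrix_vector_mul)
  then show ?thesis by (simp add: invertible_det_nz)
qed

lemma pd_inv:
  fixes P :: "real^'n^'n"
  assumes sym: "transpose P = P" and pd: "pos_def P"
  shows "P ** matrix_inv P = mat 1" "matrix_inv P ** P = mat 1"
    "transpose (matrix_inv P) = matrix_inv P" "pos_def (matrix_inv P)"
proof -
  have "invertible P" by (rule pd_invertible[OF pd])
  then have ex: "\<exists>A'. P ** A' = mat 1 \<and> A' ** P = mat 1" unfolding invertible_def by blast
  have both: "P ** matrix_inv P = mat 1 \<and> matrix_inv P ** P = mat 1"
    unfolding matrix_inv_def by (rule someI_ex[OF ex])
  then show r: "P ** matrix_inv P = mat 1" and l: "matrix_inv P ** P = mat 1" by auto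
  let ?Q = "matrix_inv P"
  have "transpose (P ** ?Q) = mat 1" using r by simp
  hence t: "transpose ?Q ** P = mat 1" using sym by (simp add: matrix_transpose_mul)
  have "transpose ?Q = transpose ?Q ** (P ** ?Q)" using r by simp
  also have "\<dots> = (transpose ?Q ** P) ** ?Q" by (simp add: matrix_mul_assoc)
  also have "\<dots> = ?Q" using t by simp
  finally show "transpose ?Q = ?Q" .
  show "pos_def ?Q" unfolding pos_def_def
  proof (intro allI impI)
    fix x :: "real^'n" assume "x \<noteq> 0"
    let ?w = "?Q *v x"
    have px: "P *v ?w = x" using r by (simp add: matrix_vector_mul_assoc)
    have "?w \<noteq> 0" using px \<open>x \<noteq> 0\<close> by auto
    hence "0 < inner ?w (P *v ?w)" using pd unfolding pos_def_def by auto
    also have "inner ?w (P *v ?w) = inner x ?w" using px by (simp add: inner_commute)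
    finally show "0 < inner x (?Q *v x)" .
  qed
qed

lemma pd_psd: "pos_def P \<Longrightarrow> 0 \<le> inner x (P *v x)"
  unfolding pos_def_def by (cases "x = 0") (auto intro: less_imp_le)

lemma inv_transfer:
  fixes A P1 P2 :: "real^'n^'n"
  assumes s1: "transpose P1 = P1" and d1: "pos_def P1"
    and s2: "transpose P2 = P2" and d2: "pos_def P2"
    and c: "0 \<le> c"
    and H: "\<And>y. inner (transpose A *v y) (P1 *v (transpose A *v y)) \<le> c * inner y (P2 *v y)"
  shows "inner (A *v x) (matrix_inv P2 *v (A *v x)) \<le> c * inner x (matrix_inv P1 *v x)"
proof -
  let ?Q1 = "matrix_inv P1" and ?Q2 = "matrix_inv P2"
  note i1 = pd_inv[OF s1 d1] and i2 = pd_inv[OF s2 d2]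
  define y where "y = ?Q2 *v (A *v x)"
  define s where "s = inner (A *v x) (?Q2 *v (A *v x))"
  have s0: "0 \<le> s" unfolding s_def using pd_psd[OF i2(4)] by blast
  have q0: "0 \<le> inner x (?Q1 *v x)" using pd_psd[OF i1(4)] by blast
  have x_eq: "x = P1 *v (?Q1 *v x)" using i1(1) by (simp add: matrix_vector_mul_assoc)
  have s_alt: "s = inner (transpose A *v y) (P1 *v (?Q1 *v x))"
  proof -
    have "s = inner y (A *v x)" unfolding s_def y_def by (simp add: inner_commute)
    also have "\<dots> = inner (transpose A *v y) x" by (rule inner_mat_transpose)
    finally show ?thesis using x_eq by simp
  qed
  have "s\<^sup>2 \<le> inner (transpose A *v y) (P1 *v (transpose A *v y)) * inner (?Q1 *v x) (P1 *v (?Q1 *v x))"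
    unfolding s_alt by (rule psd_cs[OF s1 pd_psd[OF d1]])
  also have "inner (?Q1 *v x) (P1 *v (?Q1 *v x)) = inner x (?Q1 *v x)"
    using x_eq by (simp add: inner_commute)
  also have "inner (transpose A *v y) (P1 *v (transpose A *v y)) \<le> c * inner y (P2 *v y)" by (rule H)
  also have "inner y (P2 *v y) = s"
  proof -
    have "P2 *v y = (P2 ** ?Q2) *v (A *v x)" unfolding y_def by (rule matrix_vector_mul_assoc)
    hence "P2 *v y = A *v x" using i2(1) by simp
    thus ?thesis unfolding s_def y_def by (simp add: inner_commute)
  qed
  finally have "s\<^sup>2 \<le> c * s * inner x (?Q1 *v x)" using q0 by (simp add: mult_right_mono)
  hence "s \<le> c * inner x (?Q1 *v x)"
    using s0 by (cases "s = 0") (auto simp: power2_eq_square c q0 mult.commute mult.left_commute)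
  thus ?thesis unfolding s_def .
qed

(* ---- part LC ---- *)
definition outer :: "real^'n \<Rightarrow> real^'n \<Rightarrow> real^'n^'n" where
  "outer w u = (\<chi> i j. w$i * u$j)"

lemma sum_row_id: "sum (\<lambda>i. x$i *s row i (mat 1 :: real^'n^'n)) UNIV = (x::real^'n)"
  by (simp add: vec_eq_iff row_def mat_def sum_component if_distrib cong: if_cong)

lemma row_lambda: "row i (\<chi> k. f k) = f i"
  by (simp add: row_def vec_lambda_eta)

lemma det_I1:
  fixes u :: "real^'n" and c :: "'n \<Rightarrow> real"
  assumes "finite S" "k \<notin> S"
  shows "det (\<chi> i. if i = k then u else if i \<in> S then row i (mat 1) + c i *s u else row i (mat 1 :: real^'n^'n)) = u$k"
  using assms
proof (induction S rule: finite_induct)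
  case empty
  have "(\<chi> i. if i = k then u else if i \<in> {} then row i (mat 1) + c i *s u else row i (mat 1 :: real^'n^'n))
      = (\<chi> i. if i = k then sum (\<lambda>i. u$i *s row i (mat 1 :: real^'n^'n)) UNIV else row i (mat 1))"
    unfolding sum_row_id by (intro arg_cong[where f=vec_lambda] ext) simp
  also have "det \<dots> = u$k * det (mat 1 :: real^'n^'n)" by (rule cramer_lemma_transpose)
  finally show ?case by (simp only: det_I mult_1_right)
next
  case (insert j S)
  define Z where "Z = (\<chi> i. if i = k then u else if i \<in> S then row i (mat 1) + c i *s u else row i (mat 1 :: real^'n^'n))"
  have jk: "j \<noteq> k" using insert by auto
  have ih: "det Z = u$k" unfolding Z_def using insert.prems by (intro insert.IH) auto
  have rZ: "row i Z = (if i = k then u else if i \<in> S then row i (mat 1) + c i *s u else row i (mat 1 :: real^'n^'n))" for i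
    unfolding Z_def by (rule row_lambda)
  have "(\<chi> i. if i = k then u else if i \<in> insert j S then row i (mat 1) + c i *s u else row i (mat 1 :: real^'n^'n))
     = (\<chi> m. if m = j then row j Z + c j *s row k Z else row m Z)"
    unfolding rZ using jk insert.hyps by (intro arg_cong[where f=vec_lambda] ext) auto
  also have "det \<dots> = det Z" by (rule det_row_operation[OF jk])
  finally show ?case using ih by simp
qed

lemma det_I2:
  fixes u w :: "real^'n"
  assumes "finite S"
  shows "det (\<chi> i. if i \<in> S then row i (mat 1) + w$i *s u else row i (mat 1 :: real^'n^'n)) = 1 + (\<Sum>i\<in>S. w$i * u$i)"
  using assms
proof (induction S rule: finite_induct)
  case empty
  have "(\<chi> i. if i \<in> {} then row i (mat 1) + w$i *s u else row i (mat 1 :: real^'n^'n)) = (\<chi> i. row i (mat 1 :: real^'n^'n))"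
    by (intro arg_cong[where f=vec_lambda] ext) simp
  also have "\<dots> = mat 1" by (simp add: row_def vec_lambda_eta)
  finally show ?case by simp
next
  case (insert j S)
  define Z where "Z = (\<lambda>i. if i \<in> S then row i (mat 1) + w$i *s u else row i (mat 1 :: real^'n^'n))"
  have ih: "det (\<chi> i. Z i) = 1 + (\<Sum>i\<in>S. w$i * u$i)" unfolding Z_def by (rule insert.IH)
  have "(\<chi> i. if i \<in> insert j S then row i (mat 1) + w$i *s u else row i (mat 1 :: real^'n^'n))
     = (\<chi> i. if i = j then row i (mat 1) + w$i *s u else Z i)"
    unfolding Z_def by (intro arg_cong[where f=vec_lambda] ext) simp
  also have "det \<dots> = det (\<chi> i. if i = j then row i (mat 1) else Z i) + det (\<chi> i. if i = j then w$i *s u else Z i)"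
    by (rule det_row_add)
  also have "(\<chi> i. if i = j then row i (mat 1) else Z i) = (\<chi> i. Z i)"
    unfolding Z_def using insert.hyps by (intro arg_cong[where f=vec_lambda] ext) simp
  also have "(\<chi> i. if i = j then w$i *s u else Z i) = (\<chi> i. if i = j then w$j *s u else Z i)"
    by (intro arg_cong[where f=vec_lambda] ext) simp
  also have "det \<dots> = w$j * det (\<chi> i. if i = j then u else Z i)" by (rule det_row_mul)
  also have "det (\<chi> i. if i = j then u else Z i) = u$j"
  proof -
    have "(\<chi> i. if i = j then u else Z i) = (\<chi> i. if i = j then u else if i \<in> S then row i (mat 1) + w$i *s u else row i (mat 1 :: real^'n^'n))"
      unfolding Z_def by simp
    also have "det \<dots> = u$j" by (rule det_I1[OF insert.hyps(1,2)])
    finally show ?thesis .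
  qed
  finally show ?case using ih insert.hyps by (simp add: algebra_simps)
qed

lemma det_rank_one: "det (mat 1 + outer w u) = 1 + inner w (u::real^'n)"
proof -
  have "mat 1 + outer w u = (\<chi> i. if i \<in> UNIV then row i (mat 1) + w$i *s u else row i (mat 1 :: real^'n^'n))"
    by (simp add: vec_eq_iff outer_def row_def)
  then show ?thesis using det_I2[of UNIV w u] by (simp add: inner_vec_def)
qed

lemma mat_outer: "(M::real^'n^'n) ** outer w u = outer (M *v w) u"
  by (simp add: vec_eq_iff outer_def matrix_matrix_mult_def matrix_vector_mult_def sum_distrib_right mult.assoc)

lemma outer_scale: "outer (s *\<^sub>R w) u = s *\<^sub>R outer w u"
  by (simp add: vec_eq_iff outer_def)

lemma mat_scale: "(M::real^'n^'n) ** (s *\<^sub>R X) = s *\<^sub>R (M ** X)"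
  by (simp add: vec_eq_iff matrix_matrix_mult_def sum_distrib_left mult.left_commute)

lemma det_rank_one_update:
  fixes M :: "real^'n^'n"
  assumes "M ** M' = mat 1"
  shows "det (M + s *\<^sub>R outer b b) = det M * (1 + s * inner (M' *v b) b)"
proof -
  have "M ** (mat 1 + outer (s *\<^sub>R (M' *v b)) b) = M + s *\<^sub>R outer b b"
    using assms by (simp add: matrix_add_ldistrib mat_outer matrix_vector_mul_assoc outer_scale matrix_vector_mult_scaleR mat_scale)
  hence "det (M + s *\<^sub>R outer b b) = det M * det (mat 1 + outer (s *\<^sub>R (M' *v b)) b)"
    by (metis det_mul)
  then show ?thesis by (simp add: det_rank_one)
qed

lemma continuous_on_det: "continuous_on S (det :: real^'n^'n \<Rightarrow> real)"
  unfolding det_def by (intro continuous_intros)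

(* ---- part LD ---- *)
lemma smv: "((k::real) *\<^sub>R (A::real^'n^'n)) *v v = k *\<^sub>R (A *v v)"
  by (rule scaleR_matrix_vector_assoc[symmetric])

lemma invertible_inv:
  fixes A :: "real^'n^'n"
  assumes "invertible A"
  shows "A ** matrix_inv A = mat 1" "matrix_inv A ** A = mat 1"
proof -
  have ex: "\<exists>A'. A ** A' = mat 1 \<and> A' ** A = mat 1" using assms unfolding invertible_def by blast
  have "A ** matrix_inv A = mat 1 \<and> matrix_inv A ** A = mat 1"
    unfolding matrix_inv_def by (rule someI_ex[OF ex])
  then show "A ** matrix_inv A = mat 1" "matrix_inv A ** A = mat 1" by auto
qed

lemma outer_mult: "outer w u *v z = inner u z *\<^sub>R (w::real^'n)"
  by (simp add: vec_eq_iff outer_def matrix_vector_mult_def inner_vec_def sum_distrib_left mult_ac)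

lemma qf_outer: "inner z (outer b b *v z) = (inner b z)\<^sup>2"
  by (simp add: outer_mult power2_eq_square inner_commute)

lemma transpose_outer: "transpose (outer b b) = outer b (b::real^'n)"
  by (simp add: vec_eq_iff outer_def transpose_def mult.commute)

lemma qf_continuous: "continuous_on UNIV (\<lambda>X::real^'n^'n. inner z (X *v z))"
  unfolding inner_vec_def matrix_vector_mult_def by (intro continuous_intros)

lemma inner_axis_mat: "inner (axis i 1) ((X::real^'n^'n) *v axis j 1) = X$i$j"
proof -
  have "(X *v axis j 1) $ i = X$i$j"
    using matrix_vector_mul_component[of X "axis j 1" i]
    by (simp add: inner_axis row_def)
  then show ?thesis by (simp add: inner_axis')
qed

lemma det_scaled_id: "det (c *\<^sub>R mat 1 :: real^'n^'n) = c ^ CARD('n)"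
proof -
  have "det (c *\<^sub>R mat 1 :: real^'n^'n) = prod (\<lambda>i. (c *\<^sub>R mat 1 :: real^'n^'n)$i$i) UNIV"
    by (rule det_diagonal) (simp add: mat_def)
  also have "\<dots> = c ^ CARD('n)" by (simp add: mat_def)
  finally show ?thesis .
qed

lemma det_scaleR: "det (a *\<^sub>R Y :: real^'n^'n) = a ^ CARD('n) * det Y"
proof -
  have "a *\<^sub>R Y = (a *\<^sub>R mat 1) ** Y"
    by (simp add: scalar_matrix_assoc[symmetric])
  then show ?thesis by (simp add: det_mul det_scaled_id)
qed

lemma det_max_arith:
  fixes beta :: real and m :: nat
  assumes H: "\<And>t. 0 \<le> t \<Longrightarrow> t < 1 \<Longrightarrow> (1 - t) ^ m * (1 + t * (beta - 1)) \<le> 1"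
  shows "beta \<le> real m + 1"
proof (rule ccontr)
  assume "\<not> beta \<le> real m + 1"
  define d where "d = beta - 1 - real m"
  have d: "0 < d" using \<open>\<not> beta \<le> real m + 1\<close> unfolding d_def by simp
  define D where "D = real m * (beta - 1) + d + 1"
  have b1: "real m \<le> beta - 1" using d unfolding d_def by simp
  have mb0: "0 \<le> real m * (beta - 1)" using b1 by simp
  hence Dpos: "0 < D" unfolding D_def using d by simp
  define t where "t = d / (2 * D)"
  have t0: "0 < t" unfolding t_def using d Dpos by simp
  have dD: "d < D" unfolding D_def using mb0 by simp
  have t1: "t < 1" unfolding t_def using dD Dpos d by (simp add: divide_less_eq)
  have md: "real m * d \<le> D"
  proof -
    have "real m * d \<le> real m * (beta - 1)" using b1 d unfolding d_def by (intro mult_left_mono) auto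
    also have "\<dots> \<le> D" unfolding D_def using d by simp
    finally show ?thesis .
  qed
  have mt: "real m * t \<le> 1"
  proof -
    have "real m * t = real m * d / (2 * D)" unfolding t_def by simp
    also have "\<dots> \<le> D / (2 * D)" using md Dpos by (intro divide_right_mono) auto
    also have "\<dots> \<le> 1" using Dpos by simp
    finally show ?thesis .
  qed
  have key: "real m * (beta - 1) * t \<le> d / 2"
  proof -
    have "real m * (beta - 1) * t = real m * (beta - 1) * d / (2 * D)" unfolding t_def by simp
    also have "\<dots> \<le> D * d / (2 * D)" using Dpos d b1 unfolding D_def
      by (intro divide_right_mono mult_right_mono) auto
    also have "\<dots> = d / 2" using Dpos by simp
    finally show ?thesis .
  qed
  have bern: "1 - real m * t \<le> (1 - t) ^ m"
    using Bernoulli_inequality[of "- t" m] t1 by simp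
  have pos2: "0 \<le> 1 + t * (beta - 1)" using t0 b1 by (simp add: add_nonneg_nonneg)
  have "(1 - real m * t) * (1 + t * (beta - 1)) \<le> (1 - t) ^ m * (1 + t * (beta - 1))"
    using bern pos2 by (rule mult_right_mono)
  also have "\<dots> \<le> 1" using H t0 t1 by simp
  finally have A: "(1 - real m * t) * (1 + t * (beta - 1)) \<le> 1" .
  have "(1 - real m * t) * (1 + t * (beta - 1)) = 1 + t * (d - real m * (beta - 1) * t)"
    unfolding d_def by (simp add: algebra_simps)
  also have "\<dots> \<ge> 1 + t * (d / 2)" using key t0 by (intro add_left_mono mult_left_mono) auto
  finally have "1 + t * (d / 2) \<le> 1" using A by simp
  moreover have "0 < t * (d / 2)" using t0 d by simp
  ultimately show False by linarith
qed

lemma john: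
  fixes F :: "real^'n \<Rightarrow> real" and Bs :: "(real^'n) set" and c K :: real
  assumes hB: "\<And>b z. b \<in> Bs \<Longrightarrow> (inner b z)\<^sup>2 \<le> F z"
    and cpos: "0 < c" and hc: "\<And>z. c * (norm z)\<^sup>2 \<le> F z"
    and hK: "\<And>z. F z \<le> K * (norm z)\<^sup>2"
  shows "\<exists>R. transpose R = R \<and> (\<forall>b\<in>Bs. \<forall>z. (inner b z)\<^sup>2 \<le> inner z (R *v z))
             \<and> (\<forall>z. inner z (R *v z) \<le> real CARD('n) * F z)"
proof -
  define C where "C = {X::real^'n^'n. (\<forall>i j. X$i$j = X$j$i) \<and> (\<forall>z. 0 \<le> inner z (X *v z)) \<and> (\<forall>z. inner z (X *v z) \<le> F z)}"
  have symC: "transpose X = X \<longleftrightarrow> (\<forall>i j. X$i$j = X$j$i)" for X :: "real^'n^'n"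
    by (auto simp: vec_eq_iff transpose_def)
  have closedC: "closed C"
    unfolding C_def
    by (intro closed_Collect_conj closed_Collect_all closed_Collect_eq closed_Collect_le
        continuous_intros qf_continuous continuous_on_const)
  have boundC: "bounded C"
  proof -
    have ent: "\<bar>X$i$j\<bar> \<le> K" if "X \<in> C" for X i j
    proof -
      have sym: "\<And>i j. X$i$j = X$j$i" and ps: "\<And>z. 0 \<le> inner z (X *v z)" and up: "\<And>z. inner z (X *v z) \<le> F z"
        using that unfolding C_def by auto
      have diag: "X$k$k \<le> K" for k
      proof -
        have "X$k$k = inner (axis k 1) (X *v axis k 1)" by (simp add: inner_axis_mat)
        also have "\<dots> \<le> F (axis k 1)" by (rule up)
        also have "\<dots> \<le> K * (norm (axis k (1::real)))\<^sup>2" by (rule hK)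
        finally show ?thesis by simp
      qed
      let ?ei = "axis i (1::real)" and ?ej = "axis j (1::real)"
      have e1: "inner (?ei + ?ej) (X *v (?ei + ?ej)) = X$i$i + X$j$j + 2 * X$i$j"
        using sym[of i j] by (simp add: matrix_vector_right_distrib inner_add_left inner_add_right inner_axis_mat)
      have e2: "inner (?ei - ?ej) (X *v (?ei - ?ej)) = X$i$i + X$j$j - 2 * X$i$j"
        using sym[of i j] by (simp add: matrix_vector_mult_diff_distrib inner_diff_left inner_diff_right inner_axis_mat)
      show ?thesis using ps[of "?ei + ?ej"] ps[of "?ei - ?ej"] e1 e2 diag[of i] diag[of j] by linarith
    qed
    have "norm X \<le> norm (\<chi> i j. K :: real^'n^'n)" if "X \<in> C" for X
      by (rule norm_le_componentwise_cart, rule norm_le_componentwise_cart) (use ent[OF that] in \<open>auto intro: order_trans[OF _ abs_ge_self]\<close>)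
    then show ?thesis unfolding bounded_iff by blast
  qed
  have compC: "compact C" using closedC boundC by (simp add: compact_eq_bounded_closed)
  have cIq: "inner z ((c *\<^sub>R mat 1) *v z) = c * (norm z)\<^sup>2" for z :: "real^'n"
    by (simp only: smv matrix_vector_mul_lid inner_scaleR_right power2_norm_eq_inner)
  have cI: "c *\<^sub>R mat 1 \<in> C" unfolding C_def
    using cIq hc cpos by (auto simp: mat_def)
  obtain M where MC: "M \<in> C" and Mmax: "\<And>X. X \<in> C \<Longrightarrow> det X \<le> det M"
    using continuous_attains_sup[OF compC _ continuous_on_det] cI by blast
  have dM: "0 < det M"
  proof -
    have "det (c *\<^sub>R mat 1 :: real^'n^'n) \<le> det M" by (rule Mmax[OF cI])
    moreover have "0 < det (c *\<^sub>R mat 1 :: real^'n^'n)" unfolding det_scaled_id using cpos by simp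
    ultimately show ?thesis by linarith
  qed
  have Msym: "transpose M = M" using MC symC unfolding C_def by auto
  have Mps: "\<And>z. 0 \<le> inner z (M *v z)" and Mup: "\<And>z. inner z (M *v z) \<le> F z"
    using MC unfolding C_def by auto
  have Minv: "invertible M" using dM by (simp add: invertible_det_nz)
  define M' where "M' = matrix_inv M"
  have MM': "M ** M' = mat 1" unfolding M'_def by (rule invertible_inv[OF Minv])
  let ?n = "real CARD('n)"
  have bound: "(inner b z)\<^sup>2 \<le> ?n * inner z (M *v z)" if bB: "b \<in> Bs" for b z
  proof -
    define u where "u = M' *v b"
    define beta where "beta = inner u b"
    have Mu: "M *v u = b" unfolding u_def using MM' by (simp add: matrix_vector_mul_assoc)
    have oC: "(1 - t) *\<^sub>R M + t *\<^sub>R outer b b \<in> C" if "0 \<le> t" "t \<le> 1" for t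
    proof -
      have s: "\<forall>i j. ((1 - t) *\<^sub>R M + t *\<^sub>R outer b b)$i$j = ((1 - t) *\<^sub>R M + t *\<^sub>R outer b b)$j$i"
        using MC unfolding C_def by (auto simp: outer_def mult.commute)
      have q: "inner z (((1 - t) *\<^sub>R M + t *\<^sub>R outer b b) *v z) = (1 - t) * inner z (M *v z) + t * (inner b z)\<^sup>2" for z
        by (simp add: matrix_vector_mult_add_rdistrib smv qf_outer inner_add_right)
      have "0 \<le> (1 - t) * inner z (M *v z) + t * (inner b z)\<^sup>2" for z
        using that Mps[of z] by (intro add_nonneg_nonneg mult_nonneg_nonneg) auto
      moreover have "(1 - t) * inner z (M *v z) + t * (inner b z)\<^sup>2 \<le> F z" for z
      proof -
        have "(1 - t) * inner z (M *v z) + t * (inner b z)\<^sup>2 \<le> (1 - t) * F z + t * F z"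
          using that Mup[of z] hB[OF bB, of z] by (intro add_mono mult_left_mono) auto
        then show ?thesis by (simp add: algebra_simps)
      qed
      ultimately show ?thesis using s q unfolding C_def by auto
    qed
    have H: "(1 - t) ^ (CARD('n) - 1) * (1 + t * (beta - 1)) \<le> 1" if t0: "0 \<le> t" and t1: "t < 1" for t
    proof -
      define N where "N = CARD('n) - 1"
      have NS: "CARD('n) = Suc N" unfolding N_def by simp
      have e1: "(1 - t) *\<^sub>R (M + (t / (1 - t)) *\<^sub>R outer b b) = (1 - t) *\<^sub>R M + t *\<^sub>R outer b b"
        using t1 by (simp add: scaleR_add_right)
      have e2: "det ((1 - t) *\<^sub>R (M + (t / (1 - t)) *\<^sub>R outer b b)) = (1 - t) ^ CARD('n) * (det M * (1 + (t / (1 - t)) * beta))"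
        unfolding det_scaleR det_rank_one_update[OF MM'] u_def[symmetric] beta_def[symmetric] ..
      have e3: "(1 - t) * (1 + (t / (1 - t)) * beta) = 1 + t * (beta - 1)"
        using t1 by (simp add: field_simps)
      have e4: "(1 - t) ^ CARD('n) * (det M * (1 + (t / (1 - t)) * beta)) = det M * ((1 - t) ^ N * (1 + t * (beta - 1)))"
        unfolding NS power_Suc e3[symmetric] by (simp only: mult_ac)
      have "det M * ((1 - t) ^ N * (1 + t * (beta - 1))) \<le> det M * 1"
        using Mmax[OF oC[OF t0 less_imp_le[OF t1]]] unfolding e1[symmetric] e2 e4 by simp
      then show ?thesis using dM unfolding N_def by (simp only: mult_le_cancel_left_pos)
    qed
    have bn: "beta \<le> ?n"
      using det_max_arith[OF H] by (simp add: of_nat_diff)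
    have "(inner b z)\<^sup>2 = (inner u (M *v z))\<^sup>2"
    proof -
      have "inner b z = inner (M *v u) z" using Mu by simp
      also have "\<dots> = inner u (M *v z)" using inner_mat_transpose[of u "transpose M" z] Msym by simp
      finally show ?thesis by simp
    qed
    also have "\<dots> \<le> inner u (M *v u) * inner z (M *v z)" by (rule psd_cs[OF Msym Mps])
    also have "inner u (M *v u) = beta" unfolding beta_def using Mu by (simp add: inner_commute)
    also have "beta * inner z (M *v z) \<le> ?n * inner z (M *v z)" using bn Mps[of z] by (rule mult_right_mono)
    finally show ?thesis .
  qed
  show ?thesis
  proof (intro exI[of _ "?n *\<^sub>R M"] conjI ballI allI)
    show "transpose (?n *\<^sub>R M) = ?n *\<^sub>R M" using Msym by (simp add: transpose_scalar)
    fix z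
    show "inner z ((?n *\<^sub>R M) *v z) \<le> ?n * F z"
      using Mup[of z] by (simp add: smv mult_left_mono)
  next
    fix b z assume "b \<in> Bs"
    then show "(inner b z)\<^sup>2 \<le> inner z ((?n *\<^sub>R M) *v z)"
      using bound by (simp add: smv)
  qed
qed

(* ---- part LE ---- *)
lemma is_path_Nil [simp]: "is_path E []"
  by (simp add: is_path_def)

lemma is_path_Cons: "is_path E (e # p) \<longleftrightarrow> e \<in> E \<and> is_path E p \<and> (p \<noteq> [] \<longrightarrow> edge_tgt e = edge_src (hd p))"
proof
  assume H: "is_path E (e # p)"
  then have "e \<in> E" "set p \<subseteq> E" unfolding is_path_def by auto
  moreover have "\<forall>i. Suc i < length p \<longrightarrow> edge_tgt (p ! i) = edge_src (p ! Suc i)"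
  proof (intro allI impI)
    fix i assume "Suc i < length p"
    then show "edge_tgt (p ! i) = edge_src (p ! Suc i)"
      using H unfolding is_path_def by (metis Suc_less_eq length_Cons nth_Cons_Suc)
  qed
  moreover have "p \<noteq> [] \<longrightarrow> edge_tgt e = edge_src (hd p)"
    using H unfolding is_path_def by (metis hd_conv_nth length_Cons length_greater_0_conv nth_Cons_0 nth_Cons_Suc Suc_less_eq)
  ultimately show "e \<in> E \<and> is_path E p \<and> (p \<noteq> [] \<longrightarrow> edge_tgt e = edge_src (hd p))"
    unfolding is_path_def by auto
next
  assume H: "e \<in> E \<and> is_path E p \<and> (p \<noteq> [] \<longrightarrow> edge_tgt e = edge_src (hd p))"
  show "is_path E (e # p)" unfolding is_path_def
  proof (intro conjI allI impI)
    show "set (e # p) \<subseteq> E" using H unfolding is_path_def by auto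
  next
    fix i assume i: "Suc i < length (e # p)"
    show "edge_tgt ((e # p) ! i) = edge_src ((e # p) ! Suc i)"
    proof (cases i)
      case 0
      then show ?thesis using H i by (cases p) auto
    next
      case (Suc j)
      then show ?thesis using H i unfolding is_path_def by auto
    qed
  qed
qed

lemma is_path_append:
  "is_path E (p @ q) \<longleftrightarrow> is_path E p \<and> is_path E q \<and> (p \<noteq> [] \<longrightarrow> q \<noteq> [] \<longrightarrow> edge_tgt (last p) = edge_src (hd q))"
  by (induction p) (auto simp: is_path_Cons)

lemma is_path_take: "is_path E p \<Longrightarrow> is_path E (take k p)"
  using is_path_append[of E "take k p" "drop k p"] by simp

lemma is_path_drop: "is_path E p \<Longrightarrow> is_path E (drop k p)"
  using is_path_append[of E "take k p" "drop k p"] by simp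

lemma mat_prod_seq_append: "mat_prod_seq A (xs @ ys) = mat_prod_seq A ys ** mat_prod_seq A xs"
  by (induction xs) (simp_all add: matrix_mul_assoc)

lemma finite_paths: "finite E \<Longrightarrow> finite {p. is_path E p \<and> length p = t}"
  by (rule finite_subset[OF _ finite_lists_length_eq[of E t]]) (auto simp: is_path_def)

lemma mnorm_mult: "mnorm (X ** Y) \<le> mnorm X * mnorm (Y::real^'n^'n)"
proof -
  have "(\<lambda>x. (X ** Y) *v x) = (\<lambda>x. X *v x) \<circ> (\<lambda>x. Y *v x)"
    by (auto simp: matrix_vector_mul_assoc)
  then show ?thesis unfolding mnorm_def
    by (metis onorm_compose matrix_vector_mul_bounded_linear)
qed

lemma mnorm_nonneg: "0 \<le> mnorm (X::real^'n^'n)"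
  unfolding mnorm_def by (rule onorm_pos_le) simp

lemma mnorm_apply: "norm (X *v x) \<le> mnorm (X::real^'n^'n) * norm x"
  unfolding mnorm_def by (rule onorm) simp

lemma mnorm_le: "(\<And>x. norm (X *v x) \<le> b * norm x) \<Longrightarrow> mnorm (X::real^'n^'n) \<le> b"
  unfolding mnorm_def by (rule onorm_le)

lemma mnorm_id: "mnorm (mat 1 :: real^'n^'n) = 1"
proof -
  have "((*v) (mat 1 :: real^'n^'n)) = (\<lambda>x. x)" by (rule ext) simp
  then show ?thesis unfolding mnorm_def by (simp add: onorm_id)
qed

definition pnorm :: "('v \<times> 'v \<times> 's) set \<Rightarrow> ('s \<Rightarrow> real^'n^'n) \<Rightarrow> ('v \<times> 'v \<times> 's) list \<Rightarrow> real" where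
  "pnorm E A p = mnorm (mat_prod_seq A (map edge_lbl p))"

definition amax :: "('v \<times> 'v \<times> 's) set \<Rightarrow> ('s \<Rightarrow> real^'n^'n) \<Rightarrow> nat \<Rightarrow> real" where
  "amax E A t = Max {pnorm E A p | p. is_path E p \<and> length p = t}"

locale pathsys =
  fixes E :: "('v \<times> 'v \<times> 's) set" and A :: "'s \<Rightarrow> real^'n^'n"
  assumes finE: "finite E" and ex: "\<And>t. \<exists>p. is_path E p \<and> length p = t"
begin

abbreviation "a \<equiv> amax E A"

lemma fin_set: "finite {pnorm E A p | p. is_path E p \<and> length p = t}"
proof -
  have "{pnorm E A p | p. is_path E p \<and> length p = t} = pnorm E A ` {p. is_path E p \<and> length p = t}" by auto
  then show ?thesis using finite_paths[OF finE] by simp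
qed

lemma ne_set: "{pnorm E A p | p. is_path E p \<and> length p = t} \<noteq> {}"
  using ex[of t] by auto

lemma a_upper: "is_path E p \<Longrightarrow> pnorm E A p \<le> a (length p)"
  unfolding amax_def by (rule Max_ge[OF fin_set]) auto

lemma a_attained: "\<exists>p. is_path E p \<and> length p = t \<and> a t = pnorm E A p"
proof -
  have "a t \<in> {pnorm E A p | p. is_path E p \<and> length p = t}"
    unfolding amax_def by (rule Max_in[OF fin_set ne_set])
  then show ?thesis by auto
qed

lemma a_nonneg: "0 \<le> a t"
  using a_attained[of t] by (auto simp: pnorm_def mnorm_nonneg)

lemma a_submult: "a (s + t) \<le> a s * a t"
proof -
  obtain p where p: "is_path E p" "length p = s + t" "a (s + t) = pnorm E A p" using a_attained by blast
  let ?p1 = "take s p" and ?p2 = "drop s p"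
  have "p = ?p1 @ ?p2" by simp
  then have "mat_prod_seq A (map edge_lbl p) = mat_prod_seq A (map edge_lbl ?p2) ** mat_prod_seq A (map edge_lbl ?p1)"
    by (metis map_append mat_prod_seq_append)
  then have "a (s + t) \<le> pnorm E A ?p2 * pnorm E A ?p1"
    using p(3) unfolding pnorm_def by (simp add: mnorm_mult)
  also have "\<dots> \<le> a t * a s"
    using a_upper[OF is_path_drop[OF p(1)], of s] a_upper[OF is_path_take[OF p(1)], of s] p(2)
    by (intro mult_mono) (auto simp: pnorm_def mnorm_nonneg a_nonneg)
  finally show ?thesis by (simp add: mult.commute)
qed

definition "L = Inf {a t powr (1 / real t) | t. 1 \<le> t}"

lemma bset_ne: "{a t powr (1 / real t) | t. 1 \<le> t} \<noteq> {}" by auto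

lemma bset_bdd: "bdd_below {a t powr (1 / real t) | t. 1 \<le> t}"
  by (rule bdd_belowI[of _ 0]) auto

lemma L_le: "1 \<le> t \<Longrightarrow> L \<le> a t powr (1 / real t)"
  unfolding L_def by (rule cInf_lower[OF _ bset_bdd]) auto

lemma L_nonneg: "0 \<le> L"
  unfolding L_def by (rule cInf_greatest[OF bset_ne]) auto

lemma growth:
  assumes r: "L < r"
  shows "\<exists>D>0. \<forall>t. a t \<le> D * r ^ t"
proof -
  have rpos: "0 < r" using r L_nonneg by simp
  obtain m where m: "1 \<le> m" "a m powr (1 / real m) < r"
    using cInf_lessD[OF bset_ne, of r] r unfolding L_def by auto
  have am: "a m \<le> r ^ m"
  proof (cases "a m = 0")
    case True then show ?thesis using rpos by simp
  next
    case False
    hence pos: "0 < a m" using a_nonneg[of m] by simp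
    have "a m = (a m powr (1 / real m)) ^ m"
      using pos m(1) by (simp add: powr_realpow[symmetric] powr_powr)
    also have "\<dots> \<le> r ^ m" using m(2) by (intro power_mono) auto
    finally show ?thesis .
  qed
  define D where "D = 1 + (\<Sum>s<m. a s / r ^ s)"
  have D0: "0 < D" unfolding D_def using a_nonneg rpos by (intro add_pos_nonneg sum_nonneg) auto
  have small: "a s \<le> D * r ^ s" if "s < m" for s
  proof -
    have "a s / r ^ s \<le> (\<Sum>s<m. a s / r ^ s)"
      using that a_nonneg rpos by (intro member_le_sum) auto
    hence "a s / r ^ s \<le> D" unfolding D_def by simp
    then show ?thesis using rpos by (simp add: divide_le_eq)
  qed
  have "a t \<le> D * r ^ t" for t
  proof (induction t rule: less_induct)
    case (less t)
    show ?case
    proof (cases "t < m")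
      case True then show ?thesis by (rule small)
    next
      case False
      then obtain k where k: "t = m + k" by (metis le_add_diff_inverse not_less)
      have kt: "k < t" using k m(1) by simp
      have "a t \<le> a m * a k" using a_submult k by simp
      also have "\<dots> \<le> r ^ m * (D * r ^ k)"
        using am less.IH[OF kt] a_nonneg rpos by (intro mult_mono) auto
      also have "\<dots> = D * r ^ t" using k by (simp add: power_add)
      finally show ?thesis .
    qed
  qed
  then show ?thesis using D0 by blast
qed

lemma root_bound:
  assumes D: "0 < D" and r: "0 \<le> r" and t: "1 \<le> t" and h: "a t \<le> D * r ^ t"
  shows "a t powr (1 / real t) \<le> D powr (1 / real t) * r"
proof -
  have "a t powr (1 / real t) \<le> (D * r ^ t) powr (1 / real t)"
    using h a_nonneg by (intro powr_mono2) auto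
  also have "\<dots> = D powr (1 / real t) * (r ^ t) powr (1 / real t)"
    using D r by (simp add: powr_mult)
  also have "(r ^ t) powr (1 / real t) = r"
  proof (cases "r = 0")
    case True then show ?thesis using t by simp
  next
    case False
    hence "0 < r" using r by simp
    then show ?thesis using t by (simp add: powr_realpow[symmetric] powr_powr)
  qed
  finally show ?thesis .
qed

lemma root_const_lim: "0 < D \<Longrightarrow> (\<lambda>t. D powr (1 / real t)) \<longlonglongrightarrow> 1"
proof -
  assume D: "0 < D"
  have "(\<lambda>t. D powr (1 / real t)) \<longlonglongrightarrow> D powr 0"
    by (rule tendsto_powr[OF tendsto_const lim_1_over_n]) (use D in simp)
  then show ?thesis using D by simp
qed

lemma b_tendsto: "(\<lambda>t. a t powr (1 / real t)) \<longlonglongrightarrow> L"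
proof (rule order_tendstoI)
  fix y assume "y < L"
  then show "\<forall>\<^sub>F t in sequentially. y < a t powr (1 / real t)"
    using L_le by (auto simp: eventually_sequentially intro!: exI[of _ 1] less_le_trans[of y L])
next
  fix y assume y: "L < y"
  define r where "r = (L + y) / 2"
  have r: "L < r" "r < y" using y unfolding r_def by auto
  obtain D where D: "0 < D" "\<And>t. a t \<le> D * r ^ t" using growth[OF r(1)] by blast
  have r0: "0 \<le> r" using r L_nonneg by simp
  have "(\<lambda>t. D powr (1 / real t) * r) \<longlonglongrightarrow> 1 * r"
    by (intro tendsto_mult root_const_lim[OF D(1)] tendsto_const)
  then have "\<forall>\<^sub>F t in sequentially. D powr (1 / real t) * r < y"
    using r(2) by (intro order_tendstoD) auto
  moreover have "\<forall>\<^sub>F t in sequentially. a t powr (1 / real t) \<le> D powr (1 / real t) * r"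
    using root_bound[OF D(1) r0 _ D(2)] by (auto simp: eventually_sequentially intro!: exI[of _ 1])
  ultimately show "\<forall>\<^sub>F t in sequentially. a t powr (1 / real t) < y"
    by eventually_elim auto
qed

lemma Max_powr:
  assumes t: "1 \<le> t"
  shows "Max {mnorm (mat_prod_seq A (map edge_lbl p)) powr (1 / real t) | p. is_path E p \<and> length p = t} = a t powr (1 / real t)"
proof (rule Max_eqI)
  have "{mnorm (mat_prod_seq A (map edge_lbl p)) powr (1 / real t) | p. is_path E p \<and> length p = t}
      = (\<lambda>x. x powr (1 / real t)) ` {pnorm E A p | p. is_path E p \<and> length p = t}"
    by (auto simp: pnorm_def)
  then show "finite {mnorm (mat_prod_seq A (map edge_lbl p)) powr (1 / real t) | p. is_path E p \<and> length p = t}"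
    using fin_set by simp
next
  fix y assume "y \<in> {mnorm (mat_prod_seq A (map edge_lbl p)) powr (1 / real t) | p. is_path E p \<and> length p = t}"
  then obtain p where p: "is_path E p" "length p = t" "y = pnorm E A p powr (1 / real t)" by (auto simp: pnorm_def)
  show "y \<le> a t powr (1 / real t)"
    unfolding p(3) using a_upper[OF p(1)] p(2) by (intro powr_mono2) (auto simp: pnorm_def mnorm_nonneg)
next
  obtain p where "is_path E p" "length p = t" "a t = pnorm E A p" using a_attained by blast
  then show "a t powr (1 / real t) \<in> {mnorm (mat_prod_seq A (map edge_lbl p)) powr (1 / real t) | p. is_path E p \<and> length p = t}"
    by (auto simp: pnorm_def)
qed

lemma cjsr_eq: "cjsr E A = L"
proof -
  have "(\<lambda>t. Max {mnorm (mat_prod_seq A (map edge_lbl p)) powr (1 / real t) | p. is_path E p \<and> length p = t}) \<longlonglongrightarrow> L"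
  proof (rule Lim_transform_eventually[OF b_tendsto])
    show "\<forall>\<^sub>F t in sequentially. a t powr (1 / real t) = Max {mnorm (mat_prod_seq A (map edge_lbl p)) powr (1 / real t) | p. is_path E p \<and> length p = t}"
      using Max_powr by (auto simp: eventually_sequentially intro!: exI[of _ 1])
  qed
  then show ?thesis unfolding cjsr_def by (rule limI)
qed

lemma L_le_of_bound:
  assumes K: "0 < K" and g: "0 \<le> g" and h: "\<And>t. 1 \<le> t \<Longrightarrow> a t \<le> K * g ^ t"
  shows "L \<le> g"
proof (rule LIMSEQ_le[OF b_tendsto])
  show "(\<lambda>t. K powr (1 / real t) * g) \<longlonglongrightarrow> g"
    using tendsto_mult[OF root_const_lim[OF K] tendsto_const[of g]] by simp
  show "\<exists>N. \<forall>n\<ge>N. a n powr (1 / real n) \<le> K powr (1 / real n) * g"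
    using root_bound[OF K g _ h] by auto
qed

end

(* ---- part LF ---- *)
context pathsys
begin

lemma lift_nodes_finite: "finite (lift_nodes E M)"
  unfolding lift_nodes_def by (rule finite_paths[OF finE])

lemma lift_edge_I:
  assumes "h \<in> lift_nodes E M" "is_path E (h @ [e])"
  shows "(h, drop 1 (h @ [e]), edge_lbl e) \<in> lift_edges E M" "drop 1 (h @ [e]) \<in> lift_nodes E M"
proof -
  have "length (h @ [e]) = Suc M" using assms(1) unfolding lift_nodes_def by simp
  moreover have "take M (h @ [e]) = h" using assms(1) unfolding lift_nodes_def by simp
  ultimately show "(h, drop 1 (h @ [e]), edge_lbl e) \<in> lift_edges E M"
    unfolding lift_edges_def using assms(2) by (intro CollectI exI[of _ "h @ [e]"]) auto
  show "drop 1 (h @ [e]) \<in> lift_nodes E M"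
    using assms is_path_drop[OF assms(2), of 1] unfolding lift_nodes_def by auto
qed

lemma psd_step:
  fixes B Q1 Q2 :: "real^'n^'n"
  assumes "psd (g *\<^sub>R Q1 - transpose B ** Q2 ** B)"
  shows "inner (B *v x) (Q2 *v (B *v x)) \<le> g * inner x (Q1 *v x)"
proof -
  have "0 \<le> inner x ((g *\<^sub>R Q1 - transpose B ** Q2 ** B) *v x)" using assms unfolding psd_def by blast
  also have "\<dots> = g * inner x (Q1 *v x) - inner x ((transpose B ** Q2 ** B) *v x)"
    by (simp only: matrix_vector_mult_diff_rdistrib smv inner_diff_right inner_scaleR_right)
  also have "inner x ((transpose B ** Q2 ** B) *v x) = inner (B *v x) (Q2 *v (B *v x))"
    by (rule qf_mult)
  finally show ?thesis by simp
qed

lemma lower: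
  fixes Q :: "('v \<times> 'v \<times> 's) list \<Rightarrow> real^'n^'n" and M :: nat and g :: real
  assumes hist: "\<And>e. e \<in> E \<Longrightarrow> \<exists>h. is_path E h \<and> length h = M \<and> (h \<noteq> [] \<longrightarrow> edge_tgt (last h) = edge_src e)"
    and g: "0 \<le> g"
    and Q: "\<forall>v\<in>lift_nodes E M. transpose (Q v) = Q v \<and> pos_def (Q v)"
    and edges: "\<forall>(v, w, \<sigma>)\<in>lift_edges E M. psd (g\<^sup>2 *\<^sub>R Q v - transpose (A \<sigma>) ** Q w ** A \<sigma>)"
  shows "L \<le> g"
proof -
  let ?N = "lift_nodes E M"
  have Nne: "?N \<noteq> {}" using ex[of M] unfolding lift_nodes_def by auto
  have "\<forall>h\<in>?N. \<exists>c>0. \<forall>x. c * (norm x)\<^sup>2 \<le> inner x (Q h *v x)"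
    using Q pd_lower by blast
  then obtain cf where cf: "\<And>h. h \<in> ?N \<Longrightarrow> 0 < cf h \<and> (\<forall>x. cf h * (norm x)\<^sup>2 \<le> inner x (Q h *v x))"
    by metis
  define cmin where "cmin = Min (cf ` ?N)"
  have cmin_pos: "0 < cmin" unfolding cmin_def using lift_nodes_finite Nne cf by (subst Min_gr_iff) auto
  have cmin_le: "cmin \<le> cf h" if "h \<in> ?N" for h unfolding cmin_def using lift_nodes_finite that by simp
  define Cmax where "Cmax = Max ((\<lambda>h. mnorm (Q h)) ` ?N)"
  have Cmax_ge: "mnorm (Q h) \<le> Cmax" if "h \<in> ?N" for h unfolding Cmax_def using lift_nodes_finite that by simp
  have Cmax0: "0 \<le> Cmax" using Cmax_ge Nne mnorm_nonneg by (metis all_not_in_conv order_trans)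
  have lowQ: "cmin * (norm x)\<^sup>2 \<le> inner x (Q h *v x)" if "h \<in> ?N" for h x
    using cf[OF that] cmin_le[OF that] by (meson mult_right_mono order_trans zero_le_power2)
  have upQ: "inner x (Q h *v x) \<le> Cmax * (norm x)\<^sup>2" if "h \<in> ?N" for h x
    using qf_upper[of x "Q h"] Cmax_ge[OF that] by (meson mult_right_mono order_trans zero_le_power2)
  have key: "\<forall>h x. h \<in> ?N \<longrightarrow> is_path E (h @ p) \<longrightarrow>
      drop (length p) (h @ p) \<in> ?N \<and>
      inner (mat_prod_seq A (map edge_lbl p) *v x) (Q (drop (length p) (h @ p)) *v (mat_prod_seq A (map edge_lbl p) *v x))
        \<le> (g\<^sup>2) ^ length p * inner x (Q h *v x)" for p
  proof (induction p)
    case Nil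
    then show ?case by simp
  next
    case (Cons e p)
    show ?case
    proof (intro allI impI)
      fix h x assume h: "h \<in> ?N" and hp: "is_path E (h @ e # p)"
      have he: "is_path E (h @ [e])" using hp is_path_append[of E "h @ [e]" p] by simp
      define h1 where "h1 = drop 1 (h @ [e])"
      have eI: "(h, h1, edge_lbl e) \<in> lift_edges E M" and h1N: "h1 \<in> ?N"
        using lift_edge_I[OF h he] unfolding h1_def by auto
      have step: "inner (A (edge_lbl e) *v x) (Q h1 *v (A (edge_lbl e) *v x)) \<le> g\<^sup>2 * inner x (Q h *v x)"
        using edges eI by (intro psd_step) auto
      have h1eq: "h1 @ p = drop 1 (h @ e # p)" unfolding h1_def by (cases h) auto
      have h1p: "is_path E (h1 @ p)"
        using h1eq is_path_drop[OF hp] by simp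
      have dd: "drop (length p) (h1 @ p) = drop (length (e # p)) (h @ e # p)"
        unfolding h1eq drop_drop by simp
      let ?x' = "A (edge_lbl e) *v x"
      have IH: "drop (length p) (h1 @ p) \<in> ?N \<and> inner (mat_prod_seq A (map edge_lbl p) *v ?x') (Q (drop (length p) (h1 @ p)) *v (mat_prod_seq A (map edge_lbl p) *v ?x'))
        \<le> (g\<^sup>2) ^ length p * inner ?x' (Q h1 *v ?x')"
        using Cons.IH h1N h1p by blast
      have prodeq: "mat_prod_seq A (map edge_lbl (e # p)) *v x = mat_prod_seq A (map edge_lbl p) *v ?x'"
        by (simp add: matrix_vector_mul_assoc)
      have "(g\<^sup>2) ^ length p * inner ?x' (Q h1 *v ?x') \<le> (g\<^sup>2) ^ length p * (g\<^sup>2 * inner x (Q h *v x))"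
        using step by (intro mult_left_mono) auto
      then show "drop (length (e # p)) (h @ e # p) \<in> ?N \<and>
        inner (mat_prod_seq A (map edge_lbl (e # p)) *v x) (Q (drop (length (e # p)) (h @ e # p)) *v (mat_prod_seq A (map edge_lbl (e # p)) *v x))
        \<le> (g\<^sup>2) ^ length (e # p) * inner x (Q h *v x)"
        using IH unfolding prodeq dd[symmetric] by (simp add: mult_ac)
    qed
  qed
  define K where "K = sqrt (Cmax / cmin) + 1"
  have K0: "0 < K" unfolding K_def using Cmax0 cmin_pos by (simp add: add_nonneg_pos)
  have bnd: "a t \<le> K * g ^ t" if t: "1 \<le> t" for t
  proof -
    obtain p where p: "is_path E p" "length p = t" "a t = pnorm E A p" using a_attained by blast
    have pne: "p \<noteq> []" using p(2) t by auto
    have "hd p \<in> E" using p(1) pne unfolding is_path_def by (metis hd_in_set subsetD)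
    then obtain h where h: "is_path E h" "length h = M" "h \<noteq> [] \<longrightarrow> edge_tgt (last h) = edge_src (hd p)"
      using hist by blast
    have hN: "h \<in> ?N" using h unfolding lift_nodes_def by simp
    have hp: "is_path E (h @ p)" using h p(1) pne by (simp add: is_path_append)
    let ?P = "mat_prod_seq A (map edge_lbl p)"
    have "mnorm ?P \<le> K * g ^ t"
    proof (rule mnorm_le)
      fix x
      let ?h' = "drop (length p) (h @ p)"
      have k: "?h' \<in> ?N" "inner (?P *v x) (Q ?h' *v (?P *v x)) \<le> (g\<^sup>2) ^ length p * inner x (Q h *v x)"
        using key[of p] hN hp by auto
      have s1: "cmin * (norm (?P *v x))\<^sup>2 \<le> inner (?P *v x) (Q ?h' *v (?P *v x))"
        by (rule lowQ[OF k(1)])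
      have s2: "(g\<^sup>2) ^ length p * inner x (Q h *v x) \<le> (g\<^sup>2) ^ length p * (Cmax * (norm x)\<^sup>2)"
        by (rule mult_left_mono[OF upQ[OF hN]]) simp
      have s3: "cmin * (norm (?P *v x))\<^sup>2 \<le> (g\<^sup>2) ^ t * (Cmax * (norm x)\<^sup>2)"
        using order_trans[OF s1 order_trans[OF k(2) s2]] p(2) by simp
      have s4: "(norm (?P *v x))\<^sup>2 \<le> Cmax / cmin * ((g\<^sup>2) ^ t * (norm x)\<^sup>2)"
      proof -
        have "(norm (?P *v x))\<^sup>2 \<le> ((g\<^sup>2) ^ t * (Cmax * (norm x)\<^sup>2)) / cmin"
          using s3 cmin_pos by (simp add: le_divide_eq mult.commute)
        also have "\<dots> = Cmax / cmin * ((g\<^sup>2) ^ t * (norm x)\<^sup>2)" by simp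
        finally show ?thesis .
      qed
      have s5: "(sqrt (Cmax / cmin) * g ^ t * norm x)\<^sup>2 = Cmax / cmin * ((g\<^sup>2) ^ t * (norm x)\<^sup>2)"
      proof -
        have "(g ^ t)\<^sup>2 = (g\<^sup>2) ^ t" by (simp add: power_mult[symmetric] mult.commute)
        moreover have "(sqrt (Cmax / cmin))\<^sup>2 = Cmax / cmin" using Cmax0 cmin_pos by simp
        ultimately show ?thesis by (simp only: power_mult_distrib mult.assoc)
      qed
      have "norm (?P *v x) \<le> sqrt (Cmax / cmin) * g ^ t * norm x"
        using s4 unfolding s5[symmetric] by (rule power2_le_imp_le) (use g Cmax0 cmin_pos in simp)
      also have "\<dots> \<le> K * g ^ t * norm x"
        unfolding K_def using g by (intro mult_right_mono) auto
      finally show "norm (?P *v x) \<le> K * g ^ t * norm x" .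
    qed
    then show ?thesis using p(3) unfolding pnorm_def by simp
  qed
  show ?thesis by (rule L_le_of_bound[OF K0 g bnd])
qed

end

(* ---- part LG ---- *)
definition qf :: "real^'n^'n \<Rightarrow> real^'n \<Rightarrow> real" where
  "qf X y = inner y (X *v y)"

lemma qf_add: "qf (X + Y) y = qf X y + qf Y y"
  unfolding qf_def by (simp add: matrix_vector_mult_add_rdistrib inner_add_right)

lemma qf_scale: "qf (c *\<^sub>R X) y = c * qf X y"
  unfolding qf_def by (simp only: smv inner_scaleR_right)

lemma qf_sandwich: "qf (B ** W ** transpose B) y = qf W (transpose B *v y)" for B W :: "real^'n^'n"
  unfolding qf_def by (rule qf_mult2)

fun Wf :: "('s \<Rightarrow> real^'n^'n) \<Rightarrow> real \<Rightarrow> ('v \<Rightarrow> real^'n^'n) \<Rightarrow> 'v \<Rightarrow> ('v \<times> 'v \<times> 's) list \<Rightarrow> real^'n^'n" where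
  "Wf A g R v [] = R v"
| "Wf A g R v (e # l) = R v + (1 / g) *\<^sub>R (A (edge_lbl e) ** Wf A g R (edge_src e) l ** transpose (A (edge_lbl e)))"

lemma transpose_add: "transpose (X + Y) = transpose X + transpose (Y::real^'n^'n)"
  by (simp add: vec_eq_iff transpose_def)

lemma W_sym:
  assumes "\<And>v. transpose (R v) = R v"
  shows "transpose (Wf A g R v l) = Wf A g R v l"
proof (induction l arbitrary: v)
  case Nil then show ?case using assms by simp
next
  case (Cons e l)
  show ?case using Cons.IH[where v="edge_src e"] assms
    by (simp add: transpose_add transpose_scalar matrix_transpose_mul matrix_mul_assoc)
qed

lemma W_lower:
  assumes R: "\<And>v y. (norm y)\<^sup>2 \<le> qf (R v) y" and g: "0 < g"
  shows "qf (R v) y \<le> qf (Wf A g R v l) y"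
proof (induction l arbitrary: v y)
  case Nil then show ?case by simp
next
  case (Cons e l)
  have "0 \<le> qf (Wf A g R (edge_src e) l) (transpose (A (edge_lbl e)) *v y)"
    using Cons.IH[where v="edge_src e"] R[where v="edge_src e"] by (meson order_trans zero_le_power2)
  then show ?case using g by (simp add: qf_add qf_scale qf_sandwich)
qed

lemma qf_pd: "(\<And>y. (norm y)\<^sup>2 \<le> qf X y) \<Longrightarrow> pos_def (X::real^'n^'n)"
  unfolding pos_def_def
proof (intro allI impI)
  fix y :: "real^'n" assume H: "\<And>y. (norm y)\<^sup>2 \<le> qf X y" and y: "y \<noteq> 0"
  have "0 < (norm y)\<^sup>2" using y by simp
  also have "\<dots> \<le> qf X y" by (rule H)
  finally show "0 < inner y (X *v y)" unfolding qf_def .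
qed

lemma W_pd:
  assumes R: "\<And>v y. (norm y)\<^sup>2 \<le> qf (R v) y" and g: "0 < g"
  shows "pos_def (Wf A g R v l)"
  by (rule qf_pd, rule order_trans[OF R W_lower[OF R g]])

lemma W_diff:
  "l \<noteq> [] \<Longrightarrow> qf (Wf A g R v l) y = qf (Wf A g R v (butlast l)) y
      + (1 / g) ^ length l * qf (R (edge_src (last l))) (transpose (mat_prod_seq A (map edge_lbl (rev l))) *v y)"
proof (induction l arbitrary: v y)
  case Nil then show ?case by simp
next
  case (Cons e l)
  show ?case
  proof (cases "l = []")
    case True
    then show ?thesis by (simp add: qf_add qf_scale qf_sandwich)
  next
    case False
    let ?Ae = "A (edge_lbl e)"
    let ?B = "mat_prod_seq A (map edge_lbl (rev l))"
    have prod: "mat_prod_seq A (map edge_lbl (rev (e # l))) = ?Ae ** ?B"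
      by (simp add: mat_prod_seq_append)
    have IH: "qf (Wf A g R (edge_src e) l) (transpose ?Ae *v y) = qf (Wf A g R (edge_src e) (butlast l)) (transpose ?Ae *v y)
      + (1 / g) ^ length l * qf (R (edge_src (last l))) (transpose ?B *v (transpose ?Ae *v y))"
      by (rule Cons.IH[OF False])
    have tr: "transpose (?Ae ** ?B) *v y = transpose ?B *v (transpose ?Ae *v y)"
      by (simp only: matrix_transpose_mul matrix_vector_mul_assoc)
    show ?thesis
      using False IH unfolding prod tr
      by (simp add: qf_add qf_scale qf_sandwich algebra_simps)
  qed
qed

(* ---- part LH ---- *)
context pathsys
begin

lemma Rfam:
  assumes r: "L < r"
  shows "\<exists>R. (\<forall>v. transpose (R v) = R v) \<and> (\<forall>v y. (norm y)\<^sup>2 \<le> qf (R v) y) \<and>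
     (\<forall>p y. is_path E p \<longrightarrow> p \<noteq> [] \<longrightarrow>
        qf (R (edge_src (hd p))) (transpose (mat_prod_seq A (map edge_lbl p)) *v y)
          \<le> real CARD('n) * (r ^ length p)\<^sup>2 * qf (R (edge_tgt (last p))) y)"
proof -
  have rpos: "0 < r" using r L_nonneg by simp
  obtain D where D: "0 < D" "\<And>t. a t \<le> D * r ^ t" using growth[OF r] by blast
  define Bs where "Bs v = {(1 / r ^ length q) *\<^sub>R (mat_prod_seq A (map edge_lbl q) *v u) | q u.
      is_path E q \<and> (q \<noteq> [] \<longrightarrow> edge_tgt (last q) = v) \<and> norm u = 1}" for v
  define F where "F v z = Sup ((\<lambda>b. (inner b z)\<^sup>2) ` Bs v)" for v z
  obtain u0 :: "real^'n" where u0: "norm u0 = 1" using vector_choose_size[of 1] by auto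
  have Bs_ne: "Bs v \<noteq> {}" for v
  proof -
    have "(1 / r ^ length ([]::('v \<times> 'v \<times> 's) list)) *\<^sub>R (mat_prod_seq A (map edge_lbl ([]::('v \<times> 'v \<times> 's) list)) *v u0) \<in> Bs v"
      unfolding Bs_def using u0 by (intro CollectI exI[of _ "[]"] exI[of _ u0]) simp
    then show ?thesis by blast
  qed
  have normb: "norm b \<le> D" if bB: "b \<in> Bs v" for b v
  proof -
    obtain q u where q: "b = (1 / r ^ length q) *\<^sub>R (mat_prod_seq A (map edge_lbl q) *v u)" "is_path E q" "norm u = 1"
      using bB unfolding Bs_def by blast
    have "norm (mat_prod_seq A (map edge_lbl q) *v u) \<le> a (length q)"
      using mnorm_apply[of "mat_prod_seq A (map edge_lbl q)" u] a_upper[OF q(2)] q(3) by (simp add: pnorm_def)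
    also have "\<dots> \<le> D * r ^ length q" by (rule D(2))
    finally have nb: "norm (mat_prod_seq A (map edge_lbl q) *v u) \<le> D * r ^ length q" .
    have "norm b = norm (mat_prod_seq A (map edge_lbl q) *v u) / r ^ length q" unfolding q(1) using rpos by simp
    also have "\<dots> \<le> D" using nb rpos by (simp add: divide_le_eq)
    finally show ?thesis .
  qed
  have sq_bound: "(inner b z)\<^sup>2 \<le> D\<^sup>2 * (norm z)\<^sup>2" if "b \<in> Bs v" for b v z
  proof -
    have "\<bar>inner b z\<bar> \<le> norm b * norm z" by (rule Cauchy_Schwarz_ineq2)
    also have "\<dots> \<le> D * norm z" using normb[OF that] by (simp add: mult_right_mono)
    finally have "\<bar>inner b z\<bar> \<le> D * norm z" .
    then have "\<bar>inner b z\<bar>\<^sup>2 \<le> (D * norm z)\<^sup>2" by (intro power_mono) auto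
    then show ?thesis by (simp add: power_mult_distrib)
  qed
  have bdd: "bdd_above ((\<lambda>b. (inner b z)\<^sup>2) ` Bs v)" for v z
    using sq_bound by (intro bdd_aboveI[of _ "D\<^sup>2 * (norm z)\<^sup>2"]) auto
  have hB: "(inner b z)\<^sup>2 \<le> F v z" if "b \<in> Bs v" for b v z
    unfolding F_def using that bdd by (intro cSup_upper) auto
  have hK: "F v z \<le> D\<^sup>2 * (norm z)\<^sup>2" for v z
    unfolding F_def using Bs_ne sq_bound by (intro cSup_least) auto
  have hc: "1 * (norm z)\<^sup>2 \<le> F v z" for v z
  proof (cases "z = 0")
    case True
    obtain b where "b \<in> Bs v" using Bs_ne by blast
    then show ?thesis using hB[of b v z] True by simp
  next
    case False
    define u where "u = (1 / norm z) *\<^sub>R z"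
    have nu: "norm u = 1" unfolding u_def using False by simp
    have "(1 / r ^ length ([]::('v \<times> 'v \<times> 's) list)) *\<^sub>R (mat_prod_seq A (map edge_lbl ([]::('v \<times> 'v \<times> 's) list)) *v u) \<in> Bs v"
      unfolding Bs_def using nu by (intro CollectI exI[of _ "[]"] exI[of _ u]) simp
    then have "u \<in> Bs v" by simp
    then have "(inner u z)\<^sup>2 \<le> F v z" by (rule hB)
    moreover have "inner u z = norm z" unfolding u_def using False
      by (simp add: power2_norm_eq_inner[symmetric] power2_eq_square)
    ultimately show ?thesis by simp
  qed
  have "\<forall>v. \<exists>R. transpose R = R \<and> (\<forall>b\<in>Bs v. \<forall>z. (inner b z)\<^sup>2 \<le> inner z (R *v z))
             \<and> (\<forall>z. inner z (R *v z) \<le> real CARD('n) * F v z)"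
  proof
    fix v
    show "\<exists>R. transpose R = R \<and> (\<forall>b\<in>Bs v. \<forall>z. (inner b z)\<^sup>2 \<le> inner z (R *v z))
             \<and> (\<forall>z. inner z (R *v z) \<le> real CARD('n) * F v z)"
      by (rule john[of "Bs v" "F v" 1 "D\<^sup>2"]) (use hB hc hK in auto)
  qed
  then obtain R where Rsym: "\<And>v. transpose (R v) = R v"
    and Rlow: "\<And>v b z. b \<in> Bs v \<Longrightarrow> (inner b z)\<^sup>2 \<le> inner z (R v *v z)"
    and Rup: "\<And>v z. inner z (R v *v z) \<le> real CARD('n) * F v z"
    by metis
  have FR: "F v z \<le> qf (R v) z" for v z
    unfolding F_def qf_def using Bs_ne Rlow by (intro cSup_least) auto
  have Rpd: "(norm y)\<^sup>2 \<le> qf (R v) y" for v y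
    using hc[of y v] FR[of v y] by simp
  have transfer: "F (edge_src (hd p)) (transpose (mat_prod_seq A (map edge_lbl p)) *v y) \<le> (r ^ length p)\<^sup>2 * F (edge_tgt (last p)) y"
    if p: "is_path E p" "p \<noteq> []" for p y
  proof -
    let ?P = "mat_prod_seq A (map edge_lbl p)"
    show ?thesis unfolding F_def[of "edge_src (hd p)"]
    proof (rule cSup_least)
      show "(\<lambda>b. (inner b (transpose ?P *v y))\<^sup>2) ` Bs (edge_src (hd p)) \<noteq> {}" using Bs_ne by simp
    next
      fix x assume "x \<in> (\<lambda>b. (inner b (transpose ?P *v y))\<^sup>2) ` Bs (edge_src (hd p))"
      then obtain b where b: "b \<in> Bs (edge_src (hd p))" and x: "x = (inner b (transpose ?P *v y))\<^sup>2" by blast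
      obtain q u where q: "b = (1 / r ^ length q) *\<^sub>R (mat_prod_seq A (map edge_lbl q) *v u)" "is_path E q"
        "q \<noteq> [] \<longrightarrow> edge_tgt (last q) = edge_src (hd p)" "norm u = 1"
        using b unfolding Bs_def by blast
      define b' where "b' = (1 / r ^ length (q @ p)) *\<^sub>R (mat_prod_seq A (map edge_lbl (q @ p)) *v u)"
      have b'B: "b' \<in> Bs (edge_tgt (last p))"
      proof -
        have "is_path E (q @ p)" using q(2,3) p by (simp add: is_path_append)
        moreover have "q @ p \<noteq> [] \<longrightarrow> edge_tgt (last (q @ p)) = edge_tgt (last p)" using p(2) by simp
        ultimately show ?thesis unfolding Bs_def b'_def using q(4) by blast
      qed
      have "inner b (transpose ?P *v y) = inner (?P *v b) y"
        using inner_mat_transpose[of b "transpose ?P" y] by (simp only: transpose_transpose)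
      also have "?P *v b = r ^ length p *\<^sub>R b'"
      proof -
        have "?P *v b = (1 / r ^ length q) *\<^sub>R (mat_prod_seq A (map edge_lbl (q @ p)) *v u)"
          unfolding q(1) by (simp add: mat_prod_seq_append matrix_vector_mul_assoc matrix_vector_mult_scaleR)
        also have "\<dots> = r ^ length p *\<^sub>R b'"
          unfolding b'_def using rpos by (simp add: power_add)
        finally show ?thesis .
      qed
      finally have "x = (r ^ length p)\<^sup>2 * (inner b' y)\<^sup>2" unfolding x by (simp add: power_mult_distrib)
      also have "\<dots> \<le> (r ^ length p)\<^sup>2 * F (edge_tgt (last p)) y"
        using hB[OF b'B] by (intro mult_left_mono) auto
      finally show "x \<le> (r ^ length p)\<^sup>2 * F (edge_tgt (last p)) y" .
    qed
  qed
  have RT: "qf (R (edge_src (hd p))) (transpose (mat_prod_seq A (map edge_lbl p)) *v y)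
          \<le> real CARD('n) * (r ^ length p)\<^sup>2 * qf (R (edge_tgt (last p))) y"
    if p: "is_path E p" "p \<noteq> []" for p y
  proof -
    have "qf (R (edge_src (hd p))) (transpose (mat_prod_seq A (map edge_lbl p)) *v y)
        \<le> real CARD('n) * F (edge_src (hd p)) (transpose (mat_prod_seq A (map edge_lbl p)) *v y)"
      unfolding qf_def by (rule Rup)
    also have "\<dots> \<le> real CARD('n) * ((r ^ length p)\<^sup>2 * F (edge_tgt (last p)) y)"
      using transfer[OF p] by (intro mult_left_mono) auto
    also have "\<dots> \<le> real CARD('n) * ((r ^ length p)\<^sup>2 * qf (R (edge_tgt (last p))) y)"
      using FR by (intro mult_left_mono) auto
    finally show ?thesis by (simp add: mult.assoc)
  qed
  show ?thesis using Rsym Rpd RT by blast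
qed

end

(* ---- part LI ---- *)
context pathsys
begin

lemma cst_pow:
  fixes M :: nat
  shows "(real CARD('n) powr (1 / (2 * (real M + 1)))) ^ (2 * (M + 1)) = real CARD('n)"
proof -
  have n0: "0 < real CARD('n)" by simp
  have "(real CARD('n) powr (1 / (2 * (real M + 1)))) ^ (2 * (M + 1))
      = (real CARD('n) powr (1 / (2 * (real M + 1)))) powr (real (2 * (M + 1)))"
    by (rule powr_realpow[symmetric]) (use n0 in simp)
  also have "\<dots> = real CARD('n) powr (1 / (2 * (real M + 1)) * real (2 * (M + 1)))" by (simp add: powr_powr)
  also have "1 / (2 * (real M + 1)) * real (2 * (M + 1)) = 1" by simp
  finally show ?thesis using n0 by simp
qed

lemma upper_feasible:
  fixes M :: nat and r :: real
  assumes M: "1 \<le> M" and r: "L < r"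
  shows "\<exists>Q. (\<forall>v\<in>lift_nodes E M. transpose (Q v) = Q v \<and> pos_def (Q v)) \<and>
    (\<forall>(v, w, \<sigma>)\<in>lift_edges E M. psd ((real CARD('n) powr (1 / (2 * (real M + 1))) * r)\<^sup>2 *\<^sub>R Q v - transpose (A \<sigma>) ** Q w ** A \<sigma>))"
proof -
  have rpos: "0 < r" using r L_nonneg by simp
  obtain R where Rsym: "\<And>v. transpose (R v) = R v" and Rpd: "\<And>v y. (norm y)\<^sup>2 \<le> qf (R v) y"
    and RT: "\<And>p y. is_path E p \<Longrightarrow> p \<noteq> [] \<Longrightarrow>
        qf (R (edge_src (hd p))) (transpose (mat_prod_seq A (map edge_lbl p)) *v y)
          \<le> real CARD('n) * (r ^ length p)\<^sup>2 * qf (R (edge_tgt (last p))) y"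
    using Rfam[OF r] by blast
  define cst where "cst = real CARD('n) powr (1 / (2 * (real M + 1)))"
  have cst0: "0 < cst" unfolding cst_def by simp
  define g where "g = (cst * r)\<^sup>2"
  have g0: "0 < g" unfolding g_def using cst0 rpos by simp
  have gpow: "g ^ (M + 1) = real CARD('n) * (r ^ (M + 1))\<^sup>2"
  proof -
    have "g ^ (M + 1) = (cst * r) ^ (2 * (M + 1))" unfolding g_def by (simp only: power_mult)
    also have "\<dots> = cst ^ (2 * (M + 1)) * r ^ (2 * (M + 1))" by (rule power_mult_distrib)
    also have "r ^ (2 * (M + 1)) = (r ^ (M + 1))\<^sup>2" by (metis power_mult mult.commute)
    finally have "g ^ (M + 1) = cst ^ (2 * (M + 1)) * (r ^ (M + 1))\<^sup>2" .
    then show ?thesis unfolding cst_def by (simp only: cst_pow)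
  qed
  define P where "P h = Wf A g R (edge_tgt (last h)) (rev h)" for h
  define Q where "Q h = matrix_inv (P h)" for h
  have Psym: "transpose (P h) = P h" for h unfolding P_def by (rule W_sym[OF Rsym])
  have Ppd: "pos_def (P h)" for h unfolding P_def by (rule W_pd[OF Rpd g0])
  note Qinv = pd_inv[OF Psym Ppd]
  show ?thesis
  proof (intro exI[of _ Q] conjI; intro ballI)
    fix v assume "v \<in> lift_nodes E M"
    show "transpose (Q v) = Q v \<and> pos_def (Q v)" unfolding Q_def using Qinv by blast
  next
    fix x assume "x \<in> lift_edges E M"
    then obtain p where p: "x = (take M p, drop 1 p, edge_lbl (last p))" "is_path E p" "length p = Suc M"
      unfolding lift_edges_def by blast
    define h where "h = take M p"
    define e where "e = last p"
    have pne: "p \<noteq> []" using p(3) by auto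
    have peq: "p = h @ [e]" unfolding h_def e_def using p(3) pne
      by (metis append_butlast_last_id butlast_conv_take diff_Suc_1)
    have hne: "h \<noteq> []" unfolding h_def using M p(3) by (cases p) auto
    have lh: "length h = M" unfolding h_def using p(3) by simp
    have se: "edge_src e = edge_tgt (last h)" using p(2) hne unfolding peq by (simp add: is_path_append)
    have w: "drop 1 p = tl h @ [e]" unfolding peq using hne by (cases h) auto
    let ?Ae = "A (edge_lbl e)"
    have key: "qf (P h) (transpose ?Ae *v y) \<le> g * qf (P (tl h @ [e])) y" for y
    proof -
      define X where "X = qf (Wf A g R (edge_src e) (rev (tl h))) (transpose ?Ae *v y)"
      have Pw: "qf (P (tl h @ [e])) y = qf (R (edge_tgt e)) y + (1 / g) * X"
        unfolding P_def X_def by (simp add: qf_add qf_scale qf_sandwich)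
      have prodp: "transpose (mat_prod_seq A (map edge_lbl h)) *v (transpose ?Ae *v y)
          = transpose (mat_prod_seq A (map edge_lbl p)) *v y"
        unfolding peq by (simp only: mat_prod_seq_append matrix_transpose_mul matrix_vector_mul_assoc list.map
            mat_prod_seq.simps matrix_mul_lid map_append)
      have Ph: "qf (P h) (transpose ?Ae *v y) = X + (1 / g) ^ M * qf (R (edge_src (hd p))) (transpose (mat_prod_seq A (map edge_lbl p)) *v y)"
      proof -
        have "qf (P h) (transpose ?Ae *v y) = qf (Wf A g R (edge_tgt (last h)) (butlast (rev h))) (transpose ?Ae *v y)
          + (1 / g) ^ length (rev h) * qf (R (edge_src (last (rev h)))) (transpose (mat_prod_seq A (map edge_lbl (rev (rev h)))) *v (transpose ?Ae *v y))"
          unfolding P_def by (rule W_diff) (use hne in simp)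
        also have "\<dots> = X + (1 / g) ^ M * qf (R (edge_src (hd p))) (transpose (mat_prod_seq A (map edge_lbl p)) *v y)"
          unfolding X_def prodp[symmetric] using hne lh se by (simp add: peq last_rev)
        finally show ?thesis .
      qed
      have rt: "qf (R (edge_src (hd p))) (transpose (mat_prod_seq A (map edge_lbl p)) *v y) \<le> g ^ (M + 1) * qf (R (edge_tgt e)) y"
        using RT[OF p(2) pne, of y] unfolding gpow e_def p(3) by simp
      have "(1 / g) ^ M * qf (R (edge_src (hd p))) (transpose (mat_prod_seq A (map edge_lbl p)) *v y)
          \<le> (1 / g) ^ M * (g ^ (M + 1) * qf (R (edge_tgt e)) y)"
        using rt g0 by (intro mult_left_mono) auto
      also have "\<dots> = g * qf (R (edge_tgt e)) y"
        using g0 by (simp add: power_add field_simps)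
      finally have "qf (P h) (transpose ?Ae *v y) \<le> X + g * qf (R (edge_tgt e)) y" unfolding Ph by simp
      also have "\<dots> = g * qf (P (tl h @ [e])) y" unfolding Pw using g0 by (simp add: field_simps)
      finally show ?thesis .
    qed
    have tr: "inner (?Ae *v z) (Q (tl h @ [e]) *v (?Ae *v z)) \<le> g * inner z (Q h *v z)" for z
      unfolding Q_def
      by (rule inv_transfer[OF Psym Ppd Psym Ppd]) (use g0 key in \<open>auto simp: qf_def\<close>)
    have "psd (g *\<^sub>R Q h - transpose ?Ae ** Q (tl h @ [e]) ** ?Ae)"
      unfolding psd_def
    proof
      fix z
      have "inner z ((g *\<^sub>R Q h - transpose ?Ae ** Q (tl h @ [e]) ** ?Ae) *v z)
          = g * inner z (Q h *v z) - inner z ((transpose ?Ae ** Q (tl h @ [e]) ** ?Ae) *v z)"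
        by (simp only: matrix_vector_mult_diff_rdistrib smv inner_diff_right inner_scaleR_right)
      also have "inner z ((transpose ?Ae ** Q (tl h @ [e]) ** ?Ae) *v z) = inner (?Ae *v z) (Q (tl h @ [e]) *v (?Ae *v z))"
        by (rule qf_mult)
      finally show "0 \<le> inner z ((g *\<^sub>R Q h - transpose ?Ae ** Q (tl h @ [e]) ** ?Ae) *v z)"
        using tr[of z] by simp
    qed
    then show "case x of (v, w, \<sigma>) \<Rightarrow> psd ((real CARD('n) powr (1 / (2 * (real M + 1))) * r)\<^sup>2 *\<^sub>R Q v - transpose (A \<sigma>) ** Q w ** A \<sigma>)"
      unfolding p(1) g_def cst_def w e_def[symmetric] h_def[symmetric] by simp
  qed
qed

end

(* ---- part LJ ---- *)
lemma incoming:
  assumes aut: "automaton V E" and ne: "E \<noteq> {}" and v: "v \<in> V"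
  shows "\<exists>e\<in>E. edge_tgt e = v"
proof -
  let ?R = "{(a, b). \<exists>s. (a, b, s) \<in> E}"
  have sc: "\<And>x y. x \<in> V \<Longrightarrow> y \<in> V \<Longrightarrow> (x, y) \<in> ?R\<^sup>*" and inV: "\<And>e. e \<in> E \<Longrightarrow> edge_src e \<in> V \<and> edge_tgt e \<in> V"
    using aut unfolding automaton_def by auto
  obtain e0 where e0: "e0 \<in> E" using ne by blast
  obtain x y s where exy: "e0 = (x, y, s)" by (cases e0) auto
  have xV: "x \<in> V" and yV: "y \<in> V" using inV[OF e0] exy by (auto simp: edge_src_def edge_tgt_def)
  have via: "\<exists>e\<in>E. edge_tgt e = v" if "u \<in> V" "u \<noteq> v" for u
  proof -
    have "(u, v) \<in> ?R\<^sup>*" by (rule sc[OF that(1) v])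
    then show ?thesis
    proof (cases rule: rtranclE)
      case base then show ?thesis using that by simp
    next
      case (step z)
      then obtain s' where "(z, v, s') \<in> E" by auto
      then show ?thesis by (intro bexI[of _ "(z, v, s')"]) (auto simp: edge_tgt_def)
    qed
  qed
  show ?thesis
  proof (cases "v = x")
    case False then show ?thesis using via[OF xV] by auto
  next
    case True
    show ?thesis
    proof (cases "y = x")
      case True
      then show ?thesis using e0 exy \<open>v = x\<close> by (intro bexI[of _ e0]) (auto simp: edge_tgt_def)
    next
      case False then show ?thesis using via[OF yV] \<open>v = x\<close> by auto
    qed
  qed
qed

lemma hist:
  assumes aut: "automaton V E" and ne: "E \<noteq> {}"
  shows "v \<in> V \<Longrightarrow> \<exists>h. is_path E h \<and> length h = k \<and> (h \<noteq> [] \<longrightarrow> edge_tgt (last h) = v)"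
proof (induction k arbitrary: v)
  case 0 then show ?case by auto
next
  case (Suc k)
  obtain e where e: "e \<in> E" "edge_tgt e = v" using incoming[OF aut ne Suc.prems] by blast
  have "edge_src e \<in> V" using aut e(1) unfolding automaton_def by auto
  then obtain h where h: "is_path E h" "length h = k" "h \<noteq> [] \<longrightarrow> edge_tgt (last h) = edge_src e"
    using Suc.IH by blast
  have "is_path E (h @ [e])" using h e(1) by (simp add: is_path_append is_path_Cons)
  then show ?case using h(2) e(2) by (intro exI[of _ "h @ [e]"]) auto
qed

theorem corollary3p10:
  fixes V :: "'v set" and E :: "('v \<times> 'v \<times> 's) set"
    and A :: "'s \<Rightarrow> real^'n^'n" and M :: nat
  assumes "automaton V E" and "E \<noteq> {}" and "1 \<le> M"
  shows "cjsr E A \<le> gamma_star (lift_nodes E M) (lift_edges E M) A \<and>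
         gamma_star (lift_nodes E M) (lift_edges E M) A
           \<le> real CARD('n) powr (1 / (2 * (real M + 1))) * cjsr E A"
proof -
  note aut = assms(1) and ne = assms(2) and M = assms(3)
  have finE: "finite E" using aut unfolding automaton_def by auto
  have srcV: "\<And>e. e \<in> E \<Longrightarrow> edge_src e \<in> V" using aut unfolding automaton_def by auto
  obtain e0 where e0: "e0 \<in> E" using ne by blast
  have ex: "\<exists>p. is_path E p \<and> length p = t" for t
    using hist[OF aut ne srcV[OF e0], of t] by blast
  interpret P: pathsys E A by unfold_locales (use finE ex in auto)
  have cj: "cjsr E A = P.L" by (rule P.cjsr_eq)
  define cst where "cst = real CARD('n) powr (1 / (2 * (real M + 1)))"
  have cst0: "0 < cst" unfolding cst_def by simp
  define G where "G = {\<gamma>. 0 \<le> \<gamma> \<and>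
     (\<exists>Q :: ('v \<times> 'v \<times> 's) list \<Rightarrow> real^'n^'n.
        (\<forall>v\<in>lift_nodes E M. transpose (Q v) = Q v \<and> pos_def (Q v)) \<and>
        (\<forall>(v, w, \<sigma>)\<in>lift_edges E M. psd ((\<gamma>\<^sup>2) *\<^sub>R Q v - transpose (A \<sigma>) ** Q w ** A \<sigma>)))}"
  have gs: "gamma_star (lift_nodes E M) (lift_edges E M) A = Inf G"
    unfolding gamma_star_def G_def ..
  have feas: "cst * r \<in> G" if r: "P.L < r" for r
  proof -
    have "0 \<le> cst * r" using cst0 r P.L_nonneg by simp
    then show ?thesis unfolding G_def cst_def using P.upper_feasible[OF M r] by auto
  qed
  have Gne: "G \<noteq> {}" using feas[of "P.L + 1"] by auto
  have bddG: "bdd_below G" unfolding G_def by (rule bdd_belowI[of _ 0]) auto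
  have low: "P.L \<le> \<gamma>" if "\<gamma> \<in> G" for \<gamma>
  proof -
    from that obtain Q :: "('v \<times> 'v \<times> 's) list \<Rightarrow> real^'n^'n" where g: "0 \<le> \<gamma>"
      and Q: "\<forall>v\<in>lift_nodes E M. transpose (Q v) = Q v \<and> pos_def (Q v)"
      and Ed: "\<forall>(v, w, \<sigma>)\<in>lift_edges E M. psd ((\<gamma>\<^sup>2) *\<^sub>R Q v - transpose (A \<sigma>) ** Q w ** A \<sigma>)"
      unfolding G_def by blast
    show ?thesis
    proof (rule P.lower[OF _ g Q Ed])
      fix e assume "e \<in> E"
      then show "\<exists>h. is_path E h \<and> length h = M \<and> (h \<noteq> [] \<longrightarrow> edge_tgt (last h) = edge_src e)"
        using hist[OF aut ne srcV] by blast
    qed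
  qed
  have part1: "P.L \<le> Inf G" by (rule cInf_greatest[OF Gne low])
  have part2: "Inf G \<le> cst * P.L"
  proof -
    have "Inf G / cst \<le> P.L"
    proof (rule dense_ge)
      fix r assume "P.L < r"
      then have "Inf G \<le> cst * r" by (intro cInf_lower[OF feas bddG])
      then show "Inf G / cst \<le> r" using cst0 by (simp add: divide_le_eq mult.commute)
    qed
    then show ?thesis using cst0 by (simp add: divide_le_eq mult.commute)
  qed
  show ?thesis unfolding gs cj using part1 part2 unfolding cst_def by simp
qed

end
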